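(* Let $r\in\mathbb{R}$. For all integers $n \geq m \geq 0$, \[ S_2(n,m) = \sum_{l=0}^m \binom{n}{l} (-1)^l r^l S_{2,r}(n-l,m-l). \]
   Context: $S_2(n,k)$ denotes the Stirling numbers of the second kind, given by $\frac{1}{k!}(e^t-1)^k = \sum_{n\ge k} S_2(n,k)\frac{t^n}{n!}$. For $r\in\mathbb{R}$ and integer $k\ge 0$, the extended Stirling numbers of the second kind $S_{2,r}(n,k)$ are defined by \[ \frac{1}{k!}(e^t-1+rt)^k = \sum_{n=k}^\infty S_{2,r}(n,k)\frac{t^n}{n!}, \] with $S_{2,r}(a,b)=0$ whenever $a<b$. *)

theory Defs
  imports "HOL-Combinatorics.Stirling" "HOL-Computational_Algebra.Formal_Power_Series"
begin

definition ext_Stirling2 :: "real \<Rightarrow> nat \<Rightarrow> nat \<Rightarrow> real" where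
  "ext_Stirling2 r n k =
     fact n * fps_nth (fps_const (1 / fact k) * (fps_exp 1 - 1 + fps_const r * fps_X) ^ k) n"

end

theory Submission imports Defs begin
lemma stir_egf:
  "real (Stirling n m) = fact n * fps_nth (fps_const (1/fact m) * (fps_exp 1 - 1)^m :: real fps) n"
proof (induction n arbitrary: m)
  case 0
  then show ?case by (cases m) auto
next
  case (Suc n)
  show ?case
  proof (cases m)
    case 0
    then show ?thesis by simp
  next
    case (Suc k)
    define E :: "real fps" where "E = fps_exp 1 - 1"
    have dE: "fps_deriv E = E + 1" unfolding E_def by simp
    have d: "fps_deriv (fps_const (1/fact (Suc k)) * E^Suc k)
       = fps_const (of_nat (Suc k)) * (fps_const (1/fact (Suc k)) * E^Suc k) + fps_const (1/fact k) * E^k"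
    proof -
      have p: "fps_deriv (E^Suc k) = fps_const (of_nat (Suc k)) * E^k * (E+1)"
        using fps_deriv_power[of E "Suc k"] by (simp add: dE mult_ac del: power_Suc)
      have c: "(1/fact (Suc k)) * of_nat (Suc k) = (1/fact k :: real)"
        by (simp add: divide_simps del: of_nat_Suc)
      have "fps_deriv (fps_const (1/fact (Suc k)) * E^Suc k)
          = fps_const (1/fact (Suc k)) * fps_const (of_nat (Suc k)) * (E^Suc k + E^k)"
        by (simp only: fps_deriv_mult_const_left p) (simp add: algebra_simps)
      also have "\<dots> = fps_const (of_nat (Suc k)) * (fps_const (1/fact (Suc k)) * E^Suc k)
           + fps_const ((1/fact (Suc k)) * of_nat (Suc k)) * E^k"
        by (simp only: fps_const_mult) (simp add: algebra_simps)
      finally show ?thesis by (simp only: c)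
    qed
    have gen: "\<And>G::real fps. fact (Suc n) * fps_nth G (Suc n) = fact n * fps_nth (fps_deriv G) n"
      by (simp add: fps_deriv_nth algebra_simps)
    have "fact (Suc n) * fps_nth (fps_const (1/fact (Suc k)) * E^Suc k) (Suc n)
        = fact n * fps_nth (fps_deriv (fps_const (1/fact (Suc k)) * E^Suc k)) n"
      by (rule gen)
    also have "\<dots> = of_nat (Suc k) * (fact n * fps_nth (fps_const (1/fact (Suc k)) * E^Suc k) n)
       + fact n * fps_nth (fps_const (1/fact k) * E^k) n"
      by (simp only: d fps_add_nth fps_mult_left_const_nth) (simp add: algebra_simps)
    also have "\<dots> = real (Stirling (Suc n) m)"
    proof -
      have i1: "fact n * fps_nth (fps_const (1/fact (Suc k)) * E^Suc k) n = real (Stirling n (Suc k))"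
        using Suc.IH[of "Suc k"] by (simp only: E_def)
      have i2: "fact n * fps_nth (fps_const (1/fact k) * E^k) n = real (Stirling n k)"
        using Suc.IH[of k] by (simp only: E_def)
      show ?thesis unfolding i1 i2 \<open>m = Suc k\<close> by (simp add: algebra_simps)
    qed
    finally show ?thesis by (simp add: E_def \<open>m = Suc k\<close>)
  qed
qed
theorem theorem3:
  fixes r :: real and n m :: nat
  assumes "m \<le> n"
  shows "real (Stirling n m) =
    (\<Sum>l=0..m. real (n choose l) * (-1) ^ l * r ^ l * ext_Stirling2 r (n - l) (m - l))"
proof -
  define A :: "real fps" where "A = fps_exp 1 - 1 + fps_const r * fps_X"
  define c :: "real fps" where "c = fps_const (-r) * fps_X"
  have EA: "fps_exp 1 - 1 = c + A" unfolding A_def c_def by (simp add: algebra_simps fps_const_neg[symmetric] del: fps_const_neg)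
  have cp: "\<And>l. c ^ l = fps_const ((-r)^l) * fps_X ^ l"
    unfolding c_def by (simp add: power_mult_distrib fps_const_power)
  have "real (Stirling n m) = fact n * fps_nth (fps_const (1/fact m) * (c + A)^m) n"
    using stir_egf[of n m] by (simp only: EA)
  also have "\<dots> = fact n * (\<Sum>l\<le>m. (1/fact m) * of_nat (m choose l) * (-r)^l * fps_nth (fps_X^l * A^(m-l)) n)"
    by (simp add: binomial_ring cp fps_sum_nth sum_distrib_left mult.assoc)
  also have "\<dots> = (\<Sum>l=0..m. real (n choose l) * (-1) ^ l * r ^ l * ext_Stirling2 r (n - l) (m - l))"
    unfolding sum_distrib_left atLeast0AtMost
  proof (rule sum.cong[OF refl])
    fix l assume l: "l \<in> {..m}"
    then have lm: "l \<le> m" and ln: "l \<le> n" using assms by auto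
    have e: "ext_Stirling2 r (n - l) (m - l) = fact (n-l) * ((1/fact (m-l)) * fps_nth (A^(m-l)) (n-l))"
      unfolding ext_Stirling2_def A_def by simp
    show "fact n * ((1/fact m) * of_nat (m choose l) * (-r)^l * fps_nth (fps_X^l * A^(m-l)) n)
        = real (n choose l) * (-1) ^ l * r ^ l * ext_Stirling2 r (n - l) (m - l)"
      using ln lm unfolding e fps_X_power_mult_nth
      by (simp add: binomial_fact power_minus' field_simps)
  qed
  finally show ?thesis .
qed
end
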